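(* Let $G$ be a simple loopless graph on $[L]$ and $p\ge1$. For every $(\pi,\phi)\in\Pi_{2p}(G)$, one has $\Phi_p(\pi,\phi)\in\mathcal{P}_{2p}(G)$.
   Context: $\mathcal{T}(G)=\langle v\in[L]: uv=vu \text{ for } (u,v)\in E(G)\rangle$ is the trace monoid of $G$, $e$ the empty word. Words $w_1,w_2\in\mathcal{T}(G)$ are adjacent, $w_1\leftrightarrow w_2$, if $w_1=vw_2$ or $w_2=vw_1$ for some letter $v\in[L]$. $\mathcal{P}_{2p}(G)=\{w\in\mathcal{T}(G)^{2p}: e\leftrightarrow w_1\leftrightarrow w_2\leftrightarrow\cdots\leftrightarrow w_{2p}=e\}$ (closed paths of length $2p$ from $e$ in the Cayley graph of $\mathcal{T}(G)$). $P_2(2p)$ is the set of pair partitions of $[2p]$; blocks $\{u_1,v_1\},\{u_2,v_2\}$ cross if $u_1<u_2<v_1<v_2$; $F_\pi$ is the graph on the blocks of $\pi$ with edges between crossing blocks. $\Pi_{2p}(G)=\{(\pi,\phi):\pi\in P_2(2p),\ \phi\in\operatorname{Hom}(F_\pi,G)\}$. Definition of $\Phi_p:\Pi_{2p}(G)\to\mathcal{T}(G)^{2p}$: (1) For $p=1$, if $\phi$ assigns label $i$ to the unique block $\{1,2\}$, $\Phi_1(\pi,\phi)=(i,e)$. (2) Given $\Phi_p$ and $(\pi,\phi)\in\Pi_{2(p+1)}(G)$, let $r$ be the smallest index that is the larger element of its block, $U=\{s,r\}\in\pi$ with $s<r$, $i_s=\phi(U)$, $\sigma=\pi\setminus\{U\}$,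 $\psi=\phi|_\sigma$. Identify $P_2([2(p+1)]\setminus\{s,r\})$ with $P_2(2p)$ via the order-preserving bijection, and write $u=\Phi_p(\sigma,\psi)=(u_k)_{k\in[2(p+1)]\setminus\{s,r\}}$; let $u_{k^-}$ be $u_j$ for the largest $j<k$, $j\notin\{s,r\}$, or $e$ if none exists. Then $\Phi_{p+1}(\pi,\phi)_k=u_k$ for $k<s$; $i_su_{s^-}$ for $k=s$; $i_su_k$ for $s<k<r$; $u_{r^-}$ for $k=r$; $u_k$ for $k>r$. *)

theory Defs
  imports Main
begin

definition simple_graph :: "nat \<Rightarrow> (nat \<Rightarrow> nat \<Rightarrow> bool) \<Rightarrow> bool" where
  "simple_graph L E \<longleftrightarrow>
     (\<forall>u v. E u v \<longrightarrow> u \<in> {1..L} \<and> v \<in> {1..L}) \<and>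
     (\<forall>u v. E u v \<longrightarrow> E v u) \<and> (\<forall>u. \<not> E u u)"

text \<open>Trace monoid T(G): words over [L] (lists) modulo the congruence generated by
uv = vu for edges (u,v) of G. Elements of T(G) are represented by words; equality in
T(G) is trace_eq.\<close>

inductive trace_step :: "(nat \<Rightarrow> nat \<Rightarrow> bool) \<Rightarrow> nat list \<Rightarrow> nat list \<Rightarrow> bool"
  for E where
  "E u v \<Longrightarrow> trace_step E (xs @ [u, v] @ ys) (xs @ [v, u] @ ys)"

definition trace_eq :: "(nat \<Rightarrow> nat \<Rightarrow> bool) \<Rightarrow> nat list \<Rightarrow> nat list \<Rightarrow> bool" where
  "trace_eq E = equivclp (trace_step E)"

definition is_word :: "nat \<Rightarrow> nat list \<Rightarrow> bool" where
  "is_word L w \<longleftrightarrow> set w \<subseteq> {1..L}"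

definition trace_adj :: "nat \<Rightarrow> (nat \<Rightarrow> nat \<Rightarrow> bool) \<Rightarrow> nat list \<Rightarrow> nat list \<Rightarrow> bool" where
  "trace_adj L E w1 w2 \<longleftrightarrow>
     (\<exists>v\<in>{1..L}. trace_eq E w1 (v # w2) \<or> trace_eq E w2 (v # w1))"

definition closed_paths :: "nat \<Rightarrow> (nat \<Rightarrow> nat \<Rightarrow> bool) \<Rightarrow> nat \<Rightarrow> (nat \<Rightarrow> nat list) \<Rightarrow> bool" where
  "closed_paths L E p w \<longleftrightarrow>
     (\<forall>k\<in>{1..2*p}. is_word L (w k)) \<and>
     trace_adj L E [] (w 1) \<and>
     (\<forall>k. 1 \<le> k \<and> k < 2*p \<longrightarrow> trace_adj L E (w k) (w (Suc k))) \<and>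
     trace_eq E (w (2*p)) []"

definition pair_partition :: "nat \<Rightarrow> nat set set \<Rightarrow> bool" where
  "pair_partition p \<pi> \<longleftrightarrow>
     \<Union>\<pi> = {1..2*p} \<and> (\<forall>U\<in>\<pi>. card U = 2) \<and>
     (\<forall>U\<in>\<pi>. \<forall>V\<in>\<pi>. U \<noteq> V \<longrightarrow> U \<inter> V = {})"

definition crosses :: "nat set \<Rightarrow> nat set \<Rightarrow> bool" where
  "crosses U V \<longleftrightarrow> Min U < Min V \<and> Min V < Max U \<and> Max U < Max V"

definition graph_hom :: "nat \<Rightarrow> (nat \<Rightarrow> nat \<Rightarrow> bool) \<Rightarrow> nat set set \<Rightarrow> (nat set \<Rightarrow> nat) \<Rightarrow> bool" where
  "graph_hom L E \<pi> \<phi> \<longleftrightarrow>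
     (\<forall>U\<in>\<pi>. \<phi> U \<in> {1..L}) \<and>
     (\<forall>U\<in>\<pi>. \<forall>V\<in>\<pi>. crosses U V \<or> crosses V U \<longrightarrow> E (\<phi> U) (\<phi> V))"

definition Pi_set :: "nat \<Rightarrow> (nat \<Rightarrow> nat \<Rightarrow> bool) \<Rightarrow> nat \<Rightarrow> nat set set \<Rightarrow> (nat set \<Rightarrow> nat) \<Rightarrow> bool" where
  "Pi_set L E p \<pi> \<phi> \<longleftrightarrow> pair_partition p \<pi> \<and> graph_hom L E \<pi> \<phi>"

text \<open>The identification of P_2([2(p+1)] - {s,r}) with P_2(2p) via the
order-preserving bijection is realised by defining Phi on pair partitions of an
arbitrary finite index set (the positions keep their original indices); the tuple
is a function from indices to words. Phi p pi phi is meant for partitions with p blocks.\<close>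

definition prev_val :: "nat set \<Rightarrow> (nat \<Rightarrow> nat list) \<Rightarrow> nat \<Rightarrow> nat list" where
  "prev_val S u k = (if \<exists>j\<in>S. j < k then u (Max {j\<in>S. j < k}) else [])"

fun Phi :: "nat \<Rightarrow> nat set set \<Rightarrow> (nat set \<Rightarrow> nat) \<Rightarrow> nat \<Rightarrow> nat list" where
  "Phi 0 \<pi> \<phi> = (\<lambda>k. [])"
| "Phi (Suc 0) \<pi> \<phi> =
     (let U = (THE U. U \<in> \<pi>) in (\<lambda>k. if k = Min U then [\<phi> U] else []))"
| "Phi (Suc (Suc n)) \<pi> \<phi> =
     (let r = Min (Max ` \<pi>);
          U = (THE U. U \<in> \<pi> \<and> Max U = r);
          s = Min U;
          i = \<phi> U;
          \<sigma> = \<pi> - {U};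
          u = Phi (Suc n) \<sigma> \<phi>;
          S = \<Union>\<sigma>
      in (\<lambda>k. if k < s then u k
              else if k = s then i # prev_val S u s
              else if k < r then i # u k
              else if k = r then prev_val S u r
              else u k))"

end

theory Submission imports Defs begin

lemma te_refl[simp]: "trace_eq E x x"
  unfolding trace_eq_def by (simp add: equivclp_def)
lemma te_sym: "trace_eq E x y \<Longrightarrow> trace_eq E y x"
  unfolding trace_eq_def by (rule equivclp_sym)
lemma te_trans: "trace_eq E x y \<Longrightarrow> trace_eq E y z \<Longrightarrow> trace_eq E x z"
  unfolding trace_eq_def by (meson transpD transp_equivclp)

lemma ts_cons: "trace_step E x y \<Longrightarrow> trace_step E (a#x) (a#y)"
proof (induction rule: trace_step.induct)
  case (1 u v xs ys)
  then show ?case using trace_step.intros[of E u v "a#xs" ys] by simp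
qed

lemma te_cons: "trace_eq E x y \<Longrightarrow> trace_eq E (a#x) (a#y)"
  unfolding trace_eq_def
proof (induction rule: equivclp_induct)
  case base then show ?case by (simp add: equivclp_def)
next
  case (step y z)
  then have "equivclp (trace_step E) (a#y) (a#z)"
    using ts_cons by (metis equivclp_sym r_into_rtranclp equivclp_def symclpI)
  then show ?case using step by (meson transpD transp_equivclp)
qed

lemma te_swap: "E u v \<Longrightarrow> trace_eq E (u#v#x) (v#u#x)"
  unfolding trace_eq_def equivclp_def
  using trace_step.intros[of E u v "[]" x] by (simp add: r_into_rtranclp symclpI)

lemma pv_same: "finite S \<Longrightarrow> {j\<in>S. j<k} = {j\<in>S'. j<k'} \<Longrightarrow> (\<forall>j\<in>{j\<in>S. j<k}. u j = u' j)
  \<Longrightarrow> prev_val S u k = prev_val S' u' k'"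
proof -
  assume a: "finite S" "{j\<in>S. j<k} = {j\<in>S'. j<k'}" "\<forall>j\<in>{j\<in>S. j<k}. u j = u' j"
  show ?thesis
  proof (cases "\<exists>j\<in>S. j<k")
    case True
    then have ne: "{j\<in>S. j<k} \<noteq> {}" by auto
    have "Max {j\<in>S. j<k} \<in> {j\<in>S. j<k}" using a(1) ne by (intro Max_in) auto
    moreover have "\<exists>j\<in>S'. j<k'" using ne a(2) by auto
    ultimately show ?thesis using True a unfolding prev_val_def by simp
  next
    case False
    then have "\<not>(\<exists>j\<in>S'. j<k')" using a(2) by auto
    then show ?thesis using False unfolding prev_val_def by simp
  qed
qed

lemma pv_char: "finite S \<Longrightarrow> m \<in> S \<Longrightarrow> m < k \<Longrightarrow> (\<forall>j\<in>S. j < k \<longrightarrow> j \<le> m) \<Longrightarrow> prev_val S u k = u m"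
proof -
  assume a: "finite S" "m \<in> S" "m < k" "\<forall>j\<in>S. j < k \<longrightarrow> j \<le> m"
  have "Max {j\<in>S. j<k} = m"
    by (rule Max_eqI) (use a in auto)
  then show ?thesis using a unfolding prev_val_def by auto
qed

lemma pv_none: "(\<forall>j\<in>S. \<not> j < k) \<Longrightarrow> prev_val S u k = []"
  unfolding prev_val_def by auto

lemma pv_word: "finite S \<Longrightarrow> \<forall>j\<in>S. is_word L (u j) \<Longrightarrow> is_word L (prev_val S u k)"
proof -
  assume a: "finite S" "\<forall>j\<in>S. is_word L (u j)"
  show ?thesis
  proof (cases "\<exists>j\<in>S. j<k")
    case True
    have "Max {j\<in>S. j<k} \<in> {j\<in>S. j<k}" using a(1) True by (intro Max_in) auto
    then show ?thesis using a True unfolding prev_val_def by auto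
  next
    case False then show ?thesis unfolding prev_val_def is_word_def by auto
  qed
qed

definition ppart :: "nat set set \<Rightarrow> bool" where
  "ppart \<pi> \<longleftrightarrow> finite \<pi> \<and> (\<forall>U\<in>\<pi>. card U = 2) \<and> (\<forall>U\<in>\<pi>. \<forall>V\<in>\<pi>. U \<noteq> V \<longrightarrow> U \<inter> V = {})"

definition ghom :: "nat \<Rightarrow> (nat \<Rightarrow> nat \<Rightarrow> bool) \<Rightarrow> nat set set \<Rightarrow> (nat set \<Rightarrow> nat) \<Rightarrow> bool" where
  "ghom L E \<pi> \<phi> \<longleftrightarrow> (\<forall>U\<in>\<pi>. \<phi> U \<in> {1..L}) \<and> (\<forall>U\<in>\<pi>. \<forall>V\<in>\<pi>. crosses U V \<longrightarrow> E (\<phi> U) (\<phi> V))"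

definition pinv :: "nat \<Rightarrow> (nat \<Rightarrow> nat \<Rightarrow> bool) \<Rightarrow> nat set set \<Rightarrow> (nat set \<Rightarrow> nat) \<Rightarrow> (nat \<Rightarrow> nat list) \<Rightarrow> bool" where
  "pinv L E \<pi> \<phi> w \<longleftrightarrow> (\<forall>k\<in>\<Union>\<pi>. is_word L (w k)) \<and>
    (\<forall>V\<in>\<pi>. \<forall>k\<in>V. if k = Min V then trace_eq E (w k) (\<phi> V # prev_val (\<Union>\<pi>) w k)
                     else trace_eq E (prev_val (\<Union>\<pi>) w k) (\<phi> V # w k)) \<and>
    trace_eq E (w (Max (\<Union>\<pi>))) []"

lemma two_elems: "card (U::nat set) = 2 \<Longrightarrow> U = {Min U, Max U} \<and> Min U < Max U"
proof -
  assume "card U = 2"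
  then obtain a b where ab: "U = {a,b}" "a \<noteq> b" unfolding card_2_iff by blast
  obtain x y where xy: "U = {x,y}" "x < y"
  proof (cases "a < b")
    case True then show ?thesis using ab that by blast
  next
    case False then have "b < a" "U = {b,a}" using ab by auto
    then show ?thesis using that by blast
  qed
  have "Min {x,y} = x" "Max {x,y} = y" using xy(2) by simp_all
  then show ?thesis using xy by simp
qed

lemma two_elems': "card (U::nat set) = 2 \<Longrightarrow> \<exists>a b. U = {a,b} \<and> a < b \<and> Min U = a \<and> Max U = b"
  by (metis two_elems)

lemma base_case:
  assumes "ppart \<pi>" "card \<pi> = Suc 0" "ghom L E \<pi> \<phi>"
  shows "pinv L E \<pi> \<phi> (Phi (Suc 0) \<pi> \<phi>)"
proof -
  obtain U where U: "\<pi> = {U}" using assms(2) by (auto simp: card_Suc_eq)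
  have "card U = 2" using assms(1) U unfolding ppart_def by auto
  then obtain a b where ab2: "U = {a,b}" "a < b" "Min U = a" "Max U = b" using two_elems' by blast
  have lab: "\<phi> U \<in> {1..L}" using assms(3) U unfolding ghom_def by auto
  define w where "w = (\<lambda>k. if k = a then [\<phi> U] else ([]::nat list))"
  have Pe: "Phi (Suc 0) \<pi> \<phi> = w" using U ab2(3) by (simp add: w_def)
  have pva: "prev_val U w a = []" by (rule pv_none) (use ab2 in auto)
  have pvb: "prev_val U w b = w a" by (rule pv_char) (use ab2 in auto)
  have w1: "\<forall>k\<in>\<Union>\<pi>. is_word L (w k)" using lab by (auto simp: w_def is_word_def)
  have w2: "trace_eq E (w (Max (\<Union>\<pi>))) []" using U ab2 by (simp add: w_def)
  have w3: "\<forall>V\<in>\<pi>. \<forall>k\<in>V. if k = Min V then trace_eq E (w k) (\<phi> V # prev_val (\<Union>\<pi>) w k)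
                     else trace_eq E (prev_val (\<Union>\<pi>) w k) (\<phi> V # w k)"
  proof (intro ballI)
    fix V k assume "V \<in> \<pi>" "k \<in> V"
    then have "V = U" "k = a \<or> k = b" using U ab2 by auto
    then show "if k = Min V then trace_eq E (w k) (\<phi> V # prev_val (\<Union>\<pi>) w k)
                     else trace_eq E (prev_val (\<Union>\<pi>) w k) (\<phi> V # w k)"
      using U pva pvb ab2 by (auto simp: w_def)
  qed
  show ?thesis unfolding Pe pinv_def using w1 w2 w3 by blast
qed

lemma maxb: "finite (S::nat set) \<Longrightarrow> j0 \<in> S \<Longrightarrow> j0 < k \<Longrightarrow> \<exists>m\<in>S. m < k \<and> j0 \<le> m \<and> (\<forall>j\<in>S. j<k \<longrightarrow> j \<le> m)"
proof -
  assume a: "finite S" "j0 \<in> S" "j0 < k"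
  have finK: "finite {j\<in>S. j<k}" using a(1) by simp
  have neK: "{j\<in>S. j<k} \<noteq> {}" using a by auto
  have mK: "Max {j\<in>S. j<k} \<in> {j\<in>S. j<k}" by (rule Max_in[OF finK neK])
  have mge: "\<forall>j\<in>S. j<k \<longrightarrow> j \<le> Max {j\<in>S. j<k}"
  proof (intro ballI impI)
    fix j assume "j \<in> S" "j < k"
    then show "j \<le> Max {j\<in>S. j<k}" by (intro Max_ge[OF finK]) simp
  qed
  show ?thesis using mK mge a by blast
qed

lemma step_case:
  assumes IH: "\<And>\<sigma>. ppart \<sigma> \<Longrightarrow> card \<sigma> = Suc n \<Longrightarrow> ghom L E \<sigma> \<phi> \<Longrightarrow> pinv L E \<sigma> \<phi> (Phi (Suc n) \<sigma> \<phi>)"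
    and pp: "ppart \<pi>" and cd: "card \<pi> = Suc (Suc n)" and hom: "ghom L E \<pi> \<phi>"
  shows "pinv L E \<pi> \<phi> (Phi (Suc (Suc n)) \<pi> \<phi>)"
proof -
  define r where "r = Min (Max ` \<pi>)"
  define U where "U = (THE U. U \<in> \<pi> \<and> Max U = r)"
  define s where "s = Min U"
  define i where "i = \<phi> U"
  define \<sigma> where "\<sigma> = \<pi> - {U}"
  define u where "u = Phi (Suc n) \<sigma> \<phi>"
  define S where "S = \<Union>\<sigma>"
  define W where "W = (\<lambda>k. if k < s then u k
              else if k = s then i # prev_val S u s
              else if k < r then i # u k
              else if k = r then prev_val S u r
              else u k)"
  have PW: "Phi (Suc (Suc n)) \<pi> \<phi> = W"
    unfolding W_def u_def S_def \<sigma>_def i_def s_def U_def r_def by (simp only: Phi.simps Let_def)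
  have fin: "finite \<pi>" and c2: "\<And>V. V \<in> \<pi> \<Longrightarrow> card V = 2"
    and dis: "\<And>V V'. V \<in> \<pi> \<Longrightarrow> V' \<in> \<pi> \<Longrightarrow> V \<noteq> V' \<Longrightarrow> V \<inter> V' = {}"
    using pp unfolding ppart_def by auto
  have finV: "\<And>V. V \<in> \<pi> \<Longrightarrow> finite V" using c2 by (metis card.infinite zero_neq_numeral)
  have neV: "\<And>V. V \<in> \<pi> \<Longrightarrow> V \<noteq> {}" using c2 by fastforce
  have ne: "\<pi> \<noteq> {}" using cd by auto
  have "r \<in> Max ` \<pi>" unfolding r_def using fin ne by (intro Min_in) auto
  then obtain U0 where U0: "U0 \<in> \<pi>" "Max U0 = r" by auto
  have uniq: "V = U0" if "V \<in> \<pi>" "Max V = r" for V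
  proof (rule ccontr)
    assume "V \<noteq> U0"
    then have "V \<inter> U0 = {}" using dis that U0 by blast
    moreover have "r \<in> V" using that finV neV Max_in by metis
    moreover have "r \<in> U0" using U0 finV neV Max_in by metis
    ultimately show False by blast
  qed
  have UU0: "U = U0" unfolding U_def
  proof (rule the_equality)
    show "U0 \<in> \<pi> \<and> Max U0 = r" using U0 by simp
  next
    fix V assume "V \<in> \<pi> \<and> Max V = r"
    then show "V = U0" using uniq by blast
  qed
  have Upi: "U \<in> \<pi>" and MU: "Max U = r" using U0 UU0 by auto
  have rmin: "\<And>V. V \<in> \<pi> \<Longrightarrow> r \<le> Max V" unfolding r_def using fin by auto
  obtain a b where ab: "U = {a,b}" "a < b" "Min U = a" "Max U = b" using two_elems' c2[OF Upi] by blast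
  have sU: "Min U = s" and iU: "\<phi> U = i" unfolding s_def i_def by simp_all
  have sa: "s = a" using ab(3) sU by simp
  have rb: "r = b" using ab(4) MU by simp
  have Usr: "U = {s, r}" "s < r" using ab(1,2) sa rb by auto
  have iL: "i \<in> {1..L}" using hom Upi unfolding ghom_def iU[symmetric] by auto
  have \<sigma>sub: "\<sigma> \<subseteq> \<pi>" unfolding \<sigma>_def by auto
  have pp\<sigma>: "ppart \<sigma>" using pp unfolding ppart_def \<sigma>_def by auto
  have cd\<sigma>: "card \<sigma> = Suc n" unfolding \<sigma>_def using cd Upi fin by simp
  have hom\<sigma>: "ghom L E \<sigma> \<phi>" using hom \<sigma>sub unfolding ghom_def by blast
  have IHu: "pinv L E \<sigma> \<phi> u" unfolding u_def using IH pp\<sigma> cd\<sigma> hom\<sigma> by blast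
  have finS: "finite S" unfolding S_def 
  proof (rule finite_Union)
    show "finite \<sigma>" using fin \<sigma>_def by simp
    show "\<And>M. M \<in> \<sigma> \<Longrightarrow> finite M" using finV \<sigma>sub by blast
  qed
  have neS: "S \<noteq> {}"
  proof -
    have "\<sigma> \<noteq> {}" using cd\<sigma> by auto
    then obtain V where "V \<in> \<sigma>" by blast
    then show ?thesis unfolding S_def using neV \<sigma>sub by blast
  qed
  have sS: "s \<notin> S" and rS: "r \<notin> S"
  proof -
    have "\<And>x. x \<in> U \<Longrightarrow> x \<notin> S"
    proof
      fix x assume "x \<in> U" "x \<in> S"
      then obtain V where "V \<in> \<sigma>" "x \<in> V" unfolding S_def by auto
      then show False using dis[of V U] Upi \<open>x \<in> U\<close> \<sigma>_def by auto
    qed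
    then show "s \<notin> S" "r \<notin> S" using Usr by auto
  qed
  have T: "\<Union>\<pi> = S \<union> {s, r}" unfolding S_def \<sigma>_def using Upi Usr by auto
  have finT: "finite (\<Union>\<pi>)" using T finS by simp
  have uw: "\<forall>k\<in>S. is_word L (u k)" using IHu unfolding pinv_def S_def by blast
  have urel: "\<forall>V\<in>\<sigma>. \<forall>k\<in>V. if k = Min V then trace_eq E (u k) (\<phi> V # prev_val S u k)
                     else trace_eq E (prev_val S u k) (\<phi> V # u k)"
    using IHu unfolding pinv_def S_def by blast
  have umax: "trace_eq E (u (Max S)) []" using IHu unfolding pinv_def S_def by blast

  have low: "prev_val (\<Union>\<pi>) W k = prev_val S u k" if "k \<le> s" for k
  proof -
    have e1: "{j\<in>\<Union>\<pi>. j<k} = {j\<in>S. j<k}" using T that Usr by auto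
    have e2: "\<forall>j\<in>{j\<in>\<Union>\<pi>. j<k}. W j = u j"
    proof
      fix j assume "j \<in> {j\<in>\<Union>\<pi>. j<k}"
      then have "j < s" using that by simp
      then show "W j = u j" unfolding W_def by simp
    qed
    show ?thesis by (rule pv_same[OF finT e1 e2])
  qed
  have Tcases: "\<And>j. j \<in> \<Union>\<pi> \<Longrightarrow> j \<in> S \<or> j = s \<or> j = r" using T by blast
  have mid: "prev_val (\<Union>\<pi>) W k = i # prev_val S u k" if sk: "s < k" and kr: "k \<le> r" for k
  proof (cases "\<exists>j\<in>S. s < j \<and> j < k")
    case True
    then obtain j0 where j0: "j0 \<in> S" "s < j0" "j0 < k" by blast
    obtain m where m: "m \<in> S" "m < k" "j0 \<le> m" "\<forall>j\<in>S. j<k \<longrightarrow> j \<le> m" using maxb[OF finS j0(1) j0(3)] by blast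
    have sm: "s < m" using j0 m by linarith
    have mT: "m \<in> \<Union>\<pi>" using T m by blast
    have allT: "\<forall>j\<in>\<Union>\<pi>. j<k \<longrightarrow> j \<le> m"
    proof (intro ballI impI)
      fix j assume "j \<in> \<Union>\<pi>" "j < k"
      then show "j \<le> m" using Tcases[of j] m(4) sm kr by auto
    qed
    have "prev_val (\<Union>\<pi>) W k = W m" by (rule pv_char[OF finT mT m(2) allT])
    also have "W m = i # u m"
    proof -
      have "\<not> m < s" "m \<noteq> s" "m < r" using sm m(2) kr by linarith+
      then show ?thesis unfolding W_def by simp
    qed
    also have "u m = prev_val S u k" using pv_char[OF finS m(1) m(2) m(4)] by simp
    finally show ?thesis .
  next
    case False
    have sT: "s \<in> \<Union>\<pi>" using T by blast
    have allT: "\<forall>j\<in>\<Union>\<pi>. j<k \<longrightarrow> j \<le> s"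
    proof (intro ballI impI)
      fix j assume "j \<in> \<Union>\<pi>" "j < k"
      then show "j \<le> s" using Tcases[of j] False kr by force
    qed
    have "prev_val (\<Union>\<pi>) W k = W s" by (rule pv_char[OF finT sT sk allT])
    also have "W s = i # prev_val S u s" unfolding W_def by simp
    also have "prev_val S u s = prev_val S u k"
    proof (rule pv_same[OF finS])
      have "\<forall>j\<in>S. j<k \<longrightarrow> j<s"
      proof (intro ballI impI)
        fix j assume jj: "j \<in> S" "j < k"
        then have "\<not> s < j" using False by blast
        moreover have "j \<noteq> s" using sS jj(1) by blast
        ultimately show "j < s" by linarith
      qed
      then show "{j\<in>S. j<s} = {j\<in>S. j<k}" using sk by auto
    qed simp
    finally show ?thesis .
  qed
  have high: "prev_val (\<Union>\<pi>) W k = prev_val S u k" if rk: "r < k" for k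
  proof (cases "\<exists>j\<in>S. r < j \<and> j < k")
    case True
    then obtain j0 where j0: "j0 \<in> S" "r < j0" "j0 < k" by blast
    obtain m where m: "m \<in> S" "m < k" "j0 \<le> m" "\<forall>j\<in>S. j<k \<longrightarrow> j \<le> m" using maxb[OF finS j0(1) j0(3)] by blast
    have rm: "r < m" using j0 m by linarith
    have mT: "m \<in> \<Union>\<pi>" using T m by blast
    have allT: "\<forall>j\<in>\<Union>\<pi>. j<k \<longrightarrow> j \<le> m"
    proof (intro ballI impI)
      fix j assume "j \<in> \<Union>\<pi>" "j < k"
      then show "j \<le> m" using Tcases[of j] m(4) rm Usr(2) by auto
    qed
    have "prev_val (\<Union>\<pi>) W k = W m" by (rule pv_char[OF finT mT m(2) allT])
    also have "W m = u m"
    proof -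
      have "\<not> m < s" "m \<noteq> s" "\<not> m < r" "m \<noteq> r" using rm Usr(2) by linarith+
      then show ?thesis unfolding W_def by simp
    qed
    also have "u m = prev_val S u k" using pv_char[OF finS m(1) m(2) m(4)] by simp
    finally show ?thesis .
  next
    case False
    have rT: "r \<in> \<Union>\<pi>" using T by blast
    have allT: "\<forall>j\<in>\<Union>\<pi>. j<k \<longrightarrow> j \<le> r"
    proof (intro ballI impI)
      fix j assume "j \<in> \<Union>\<pi>" "j < k"
      then show "j \<le> r" using Tcases[of j] False Usr(2) by force
    qed
    have "prev_val (\<Union>\<pi>) W k = W r" by (rule pv_char[OF finT rT rk allT])
    also have "W r = prev_val S u r"
    proof -
      have "\<not> r < s" "r \<noteq> s" using Usr(2) by linarith+
      then show ?thesis unfolding W_def by simp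
    qed
    also have "prev_val S u r = prev_val S u k"
    proof (rule pv_same[OF finS])
      have "\<forall>j\<in>S. j<k \<longrightarrow> j<r"
      proof (intro ballI impI)
        fix j assume jj: "j \<in> S" "j < k"
        then have "\<not> r < j" using False by blast
        moreover have "j \<noteq> r" using rS jj(1) by blast
        ultimately show "j < r" by linarith
      qed
      then show "{j\<in>S. j<r} = {j\<in>S. j<k}" using rk by auto
    qed simp
    finally show ?thesis .
  qed
  have pvw: "\<And>x. is_word L (prev_val S u x)" using pv_word[OF finS uw] by blast
  have A1: "\<forall>k\<in>\<Union>\<pi>. is_word L (W k)"
  proof
    fix k assume "k \<in> \<Union>\<pi>"
    then have "k \<in> S \<or> k = s \<or> k = r" using T by auto
    then show "is_word L (W k)" using uw pvw iL Usr(2) unfolding W_def is_word_def by auto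
  qed
  have A2: "\<forall>V\<in>\<pi>. \<forall>k\<in>V. if k = Min V then trace_eq E (W k) (\<phi> V # prev_val (\<Union>\<pi>) W k)
                     else trace_eq E (prev_val (\<Union>\<pi>) W k) (\<phi> V # W k)"
  proof (intro ballI)
    fix V k assume V: "V \<in> \<pi>" and kV: "k \<in> V"
    show "if k = Min V then trace_eq E (W k) (\<phi> V # prev_val (\<Union>\<pi>) W k)
                     else trace_eq E (prev_val (\<Union>\<pi>) W k) (\<phi> V # W k)"
    proof (cases "V = U")
      case True
      then have "k = s \<or> k = r" using kV Usr by auto
      then show ?thesis
      proof
        assume ks: "k = s"
        have "W s = i # prev_val S u s" unfolding W_def by simp
        then show ?thesis using ks True low[of s] sU iU by simp
      next
        assume kr: "k = r"
        have "W r = prev_val S u r" unfolding W_def using Usr by simp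
        moreover have "prev_val (\<Union>\<pi>) W r = i # prev_val S u r" using mid[of r] Usr by simp
        ultimately show ?thesis using kr True Usr(2) sU iU by simp
      qed
    next
      case False
      then have V\<sigma>: "V \<in> \<sigma>" using V \<sigma>_def by auto
      then have kS: "k \<in> S" using kV S_def by auto
      then have ksr: "k \<noteq> s" "k \<noteq> r" using sS rS by auto
      have rel: "if k = Min V then trace_eq E (u k) (\<phi> V # prev_val S u k)
                     else trace_eq E (prev_val S u k) (\<phi> V # u k)" using urel V\<sigma> kV by blast
      consider "k < s" | "s < k \<and> k < r" | "r < k" using ksr by linarith
      then show ?thesis
      proof cases
        case 1
        then have Wk: "W k = u k" unfolding W_def by simp
        have pk: "prev_val (\<Union>\<pi>) W k = prev_val S u k" using low[of k] 1 by simp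
        show ?thesis unfolding Wk pk by (rule rel)
      next
        case 3
        then have Wk: "W k = u k" unfolding W_def using Usr by simp
        have pk: "prev_val (\<Union>\<pi>) W k = prev_val S u k" using high[of k] 3 by simp
        show ?thesis unfolding Wk pk by (rule rel)
      next
        case 2
        obtain c d where cd: "V = {c,d}" "c < d" "Min V = c" "Max V = d" using two_elems' c2[OF V] by blast
        have "r \<le> d" using rmin[OF V] cd by simp
        moreover have "d \<noteq> r" using rS V\<sigma> cd S_def by auto
        ultimately have rd: "r < d" by simp
        have kc: "k = c" using kV cd 2 rd by auto
        have "crosses U V" unfolding crosses_def using cd kc 2 rd MU sU by simp
        then have EiV: "E i (\<phi> V)" using hom Upi V unfolding ghom_def iU[symmetric] by blast
        have Wk: "W k = i # u k" unfolding W_def using 2 by simp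
        have pk: "prev_val (\<Union>\<pi>) W k = i # prev_val S u k" using mid[of k] 2 by simp
        have r1: "trace_eq E (u k) (\<phi> V # prev_val S u k)" using rel kc cd by simp
        have t1: "trace_eq E (W k) (i # \<phi> V # prev_val S u k)" unfolding Wk by (rule te_cons[OF r1])
        have t2: "trace_eq E (i # \<phi> V # prev_val S u k) (\<phi> V # i # prev_val S u k)" using EiV by (rule te_swap)
        have "trace_eq E (W k) (\<phi> V # prev_val (\<Union>\<pi>) W k)" unfolding pk by (rule te_trans[OF t1 t2])
        then show ?thesis using kc cd by simp
      qed
    qed
  qed
  have A3: "trace_eq E (W (Max (\<Union>\<pi>))) []"
  proof -
    have MS: "Max S \<in> S" using finS neS by simp
    then have "Max S \<noteq> r" using rS by auto
    then consider "r < Max S" | "Max S < r" by linarith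
    then show ?thesis
    proof cases
      case 1
      have "Max (\<Union>\<pi>) = Max S" by (rule Max_eqI[OF finT]) (use T finS MS 1 Usr in auto)
      moreover have "W (Max S) = u (Max S)" unfolding W_def using 1 Usr by simp
      ultimately show ?thesis using umax by simp
    next
      case 2
      have "Max (\<Union>\<pi>) = r"
      proof (rule Max_eqI[OF finT])
        fix y assume "y \<in> \<Union>\<pi>"
        then have "y \<in> S \<or> y = s \<or> y = r" using Tcases by blast
        moreover have "y \<in> S \<Longrightarrow> y \<le> Max S" using finS by simp
        ultimately show "y \<le> r" using 2 Usr(2) by force
      qed (use T in auto)
      moreover have "W r = prev_val S u r" unfolding W_def using Usr by simp
      moreover have "prev_val S u r = u (Max S)" by (rule pv_char[OF finS MS 2]) (use finS in auto)
      ultimately show ?thesis using umax by simp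
    qed
  qed
  show ?thesis unfolding PW pinv_def using A1 A2 A3 by blast
qed

lemma main_lemma: "ppart \<pi> \<Longrightarrow> card \<pi> = Suc n \<Longrightarrow> ghom L E \<pi> \<phi> \<Longrightarrow> pinv L E \<pi> \<phi> (Phi (Suc n) \<pi> \<phi>)"
proof (induction n arbitrary: \<pi>)
  case 0
  then show ?case using base_case by blast
next
  case (Suc n)
  show ?case by (rule step_case[OF Suc.IH Suc.prems])
qed

theorem lemma3p2:
  fixes L p :: nat and E :: "nat \<Rightarrow> nat \<Rightarrow> bool"
    and \<pi> :: "nat set set" and \<phi> :: "nat set \<Rightarrow> nat"
  assumes "simple_graph L E"
    and "p \<ge> 1"
    and "Pi_set L E p \<pi> \<phi>"
  shows "closed_paths L E p (Phi p \<pi> \<phi>)"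
proof -
  have pp: "pair_partition p \<pi>" and gh: "graph_hom L E \<pi> \<phi>" using assms(3) unfolding Pi_set_def by auto
  have U: "\<Union>\<pi> = {1..2*p}" and c2: "\<forall>U\<in>\<pi>. card U = 2"
    and dis: "\<forall>U\<in>\<pi>. \<forall>V\<in>\<pi>. U \<noteq> V \<longrightarrow> U \<inter> V = {}" using pp unfolding pair_partition_def by auto
  have fin: "finite \<pi>" by (rule finite_UnionD) (simp add: U)
  have ppi: "ppart \<pi>" unfolding ppart_def using fin c2 dis by blast
  have finB: "\<And>A. A \<in> \<pi> \<Longrightarrow> finite A" using c2 by (metis card.infinite zero_neq_numeral)
  have pw: "pairwise disjnt \<pi>" using dis unfolding pairwise_def disjnt_def by blast
  have "card (\<Union>\<pi>) = sum card \<pi>" by (rule card_Union_disjoint[OF pw finB])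
  also have "\<dots> = sum (\<lambda>_. 2) \<pi>" using c2 by (intro sum.cong) auto
  also have "\<dots> = 2 * card \<pi>" by simp
  finally have "2 * card \<pi> = 2 * p" using U by simp
  then have cp: "card \<pi> = p" by simp
  obtain n where pn: "p = Suc n" using assms(2) by (cases p) auto
  have gh2: "ghom L E \<pi> \<phi>" using gh unfolding graph_hom_def ghom_def by blast
  have inv: "pinv L E \<pi> \<phi> (Phi p \<pi> \<phi>)" unfolding pn by (rule main_lemma[OF ppi cp[unfolded pn] gh2])
  define W where "W = Phi p \<pi> \<phi>"
  have words: "\<forall>k\<in>{1..2*p}. is_word L (W k)" using inv[unfolded pinv_def U] unfolding W_def by blast
  have rel: "\<forall>V\<in>\<pi>. \<forall>k\<in>V. if k = Min V then trace_eq E (W k) (\<phi> V # prev_val {1..2*p} W k)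
                     else trace_eq E (prev_val {1..2*p} W k) (\<phi> V # W k)"
    using inv[unfolded pinv_def U] unfolding W_def by blast
  have mx: "trace_eq E (W (2*p)) []" proof -
    have "Max {1..2*p} = 2*p" using pn by (intro Max_eqI) auto
    then show ?thesis using inv[unfolded pinv_def U] unfolding W_def by simp
  qed
  have adj: "trace_adj L E (prev_val {1..2*p} W k) (W k)" if "k \<in> {1..2*p}" for k
  proof -
    have "k \<in> \<Union>\<pi>" using that U by simp
    then obtain V where V: "V \<in> \<pi>" "k \<in> V" by blast
    have lab: "\<phi> V \<in> {1..L}" using gh V unfolding graph_hom_def by blast
    have r: "if k = Min V then trace_eq E (W k) (\<phi> V # prev_val {1..2*p} W k)
                     else trace_eq E (prev_val {1..2*p} W k) (\<phi> V # W k)" using bspec[OF bspec[OF rel V(1)] V(2)] .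
    show ?thesis
    proof (cases "k = Min V")
      case True
      then have "trace_eq E (W k) (\<phi> V # prev_val {1..2*p} W k)" using r by simp
      then show ?thesis unfolding trace_adj_def using lab by blast
    next
      case False
      then have "trace_eq E (prev_val {1..2*p} W k) (\<phi> V # W k)" using r by simp
      then show ?thesis unfolding trace_adj_def using lab by blast
    qed
  qed
  have a1: "trace_adj L E [] (W 1)"
  proof -
    have "prev_val {1..2*p} W 1 = []" by (rule pv_none) auto
    then show ?thesis using adj[of 1] pn by simp
  qed
  have a2: "\<forall>k. 1 \<le> k \<and> k < 2*p \<longrightarrow> trace_adj L E (W k) (W (Suc k))"
  proof (intro allI impI)
    fix k assume k: "1 \<le> k \<and> k < 2*p"
    have "prev_val {1..2*p} W (Suc k) = W k" by (rule pv_char) (use k in auto)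
    then show "trace_adj L E (W k) (W (Suc k))" using adj[of "Suc k"] k by simp
  qed
  show ?thesis unfolding closed_paths_def W_def[symmetric] using words a1 a2 mx by blast
qed
end
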